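(* Let $f$ be a complex-valued harmonic function in a simply connected open set $R\subseteq\mathbb{C}$. If $\operatorname{int}S\neq\varnothing$, then $f(z)=\alpha+\beta u(z)$ on $R$, where $u$ is a real-valued harmonic function on $R$ and $\alpha,\beta$ are complex constants. Moreover, $S=R$ and $\mathrm{Val}(f,w_0)=\infty$ for every $w_0\in f(R)$.
   Context: Writing $f=u+iv$, $J_f=u_xv_y-u_yv_x$ and $S=\{z\in R: J_f(z)=0\}$. $\mathrm{Val}(f,w)$ is the number (possibly infinite) of distinct $z\in R$ with $f(z)=w$. *)

theory Defs
  imports "HOL-Analysis.Analysis"
begin

definition px :: "(complex \<Rightarrow> real) \<Rightarrow> complex \<Rightarrow> real" where
  "px u z = deriv (\<lambda>t::real. u (z + of_real t)) 0"

definition py :: "(complex \<Rightarrow> real) \<Rightarrow> complex \<Rightarrow> real" where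
  "py u z = deriv (\<lambda>t::real. u (z + \<i> * of_real t)) 0"

definition harmonic_real_on :: "complex set \<Rightarrow> (complex \<Rightarrow> real) \<Rightarrow> bool" where
  "harmonic_real_on R u \<longleftrightarrow>
     open R \<and>
     u differentiable_on R \<and> px u differentiable_on R \<and> py u differentiable_on R \<and>
     continuous_on R (px (px u)) \<and> continuous_on R (py (px u)) \<and>
     continuous_on R (px (py u)) \<and> continuous_on R (py (py u)) \<and>
     (\<forall>z\<in>R. px (px u) z + py (py u) z = 0)"

definition harmonic_on :: "complex set \<Rightarrow> (complex \<Rightarrow> complex) \<Rightarrow> bool" where
  "harmonic_on R f \<longleftrightarrow> harmonic_real_on R (\<lambda>z. Re (f z)) \<and> harmonic_real_on R (\<lambda>z. Im (f z))"

definition jac :: "(complex \<Rightarrow> complex) \<Rightarrow> complex \<Rightarrow> real" where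
  "jac f z = px (\<lambda>z. Re (f z)) z * py (\<lambda>z. Im (f z)) z - py (\<lambda>z. Re (f z)) z * px (\<lambda>z. Im (f z)) z"

definition crit_set :: "complex set \<Rightarrow> (complex \<Rightarrow> complex) \<Rightarrow> complex set" where
  "crit_set R f = {z\<in>R. jac f z = 0}"

definition Val :: "complex set \<Rightarrow> (complex \<Rightarrow> complex) \<Rightarrow> complex \<Rightarrow> enat" where
  "Val R f w = (if finite {z\<in>R. f z = w} then enat (card {z\<in>R. f z = w}) else \<infinity>)"

end

theory Submission
  imports Defs "HOL-Complex_Analysis.Complex_Analysis"
begin

lemma px_char:
  assumes "(u has_derivative D) (at z)"
  shows "px u z = D 1"
proof -
  have bl: "bounded_linear D" using assms has_derivative_bounded_linear by blast
  have "((\<lambda>t::real. z + of_real t) has_derivative of_real) (at 0)"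
    by (auto intro!: derivative_eq_intros)
  moreover have "(u has_derivative D) (at (z + of_real 0))" using assms by simp
  ultimately have "((\<lambda>t. u (z + of_real t)) has_derivative (\<lambda>h. D (of_real h))) (at 0)"
    by (rule has_derivative_compose)
  moreover have "(\<lambda>h. D (of_real h)) = (\<lambda>h. D 1 * h)"
  proof
    fix h :: real
    have "D (of_real h) = D (h *\<^sub>R 1)" by (simp add: scaleR_conv_of_real)
    also have "\<dots> = h *\<^sub>R D 1" using bl linear_cmul bounded_linear.linear by blast
    finally show "D (of_real h) = D 1 * h" by simp
  qed
  ultimately have "((\<lambda>t. u (z + of_real t)) has_real_derivative D 1) (at 0)"
    by (simp add: has_field_derivative_def)
  then show ?thesis unfolding px_def by (rule DERIV_imp_deriv)
qed

lemma py_char: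
  assumes "(u has_derivative D) (at z)"
  shows "py u z = D \<i>"
proof -
  have bl: "bounded_linear D" using assms has_derivative_bounded_linear by blast
  have "((\<lambda>t::real. z + \<i> * of_real t) has_derivative (\<lambda>h. \<i> * of_real h)) (at 0)"
    by (auto intro!: derivative_eq_intros)
  moreover have "(u has_derivative D) (at (z + \<i> * of_real 0))" using assms by simp
  ultimately have "((\<lambda>t. u (z + \<i> * of_real t)) has_derivative (\<lambda>h. D (\<i> * of_real h))) (at 0)"
    by (rule has_derivative_compose)
  moreover have "(\<lambda>h. D (\<i> * of_real h)) = (\<lambda>h. D \<i> * h)"
  proof
    fix h :: real
    have "D (\<i> * of_real h) = D (h *\<^sub>R \<i>)" by (simp add: scaleR_conv_of_real mult.commute)
    also have "\<dots> = h *\<^sub>R D \<i>" using bl linear_cmul bounded_linear.linear by blast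
    finally show "D (\<i> * of_real h) = D \<i> * h" by simp
  qed
  ultimately have "((\<lambda>t. u (z + \<i> * of_real t)) has_real_derivative D \<i>) (at 0)"
    by (simp add: has_field_derivative_def)
  then show ?thesis unfolding py_def by (rule DERIV_imp_deriv)
qed

lemma diff_char:
  assumes "u differentiable (at z)"
  shows "(u has_derivative (\<lambda>h. Re h * px u z + Im h * py u z)) (at z)"
proof -
  obtain D where D: "(u has_derivative D) (at z)" using assms differentiable_def by blast
  have bl: "linear D" using D has_derivative_bounded_linear bounded_linear.linear by blast
  have "D = (\<lambda>h. Re h * px u z + Im h * py u z)"
  proof
    fix h
    have "h = Re h *\<^sub>R 1 + Im h *\<^sub>R \<i>" by (simp add: complex_eq_iff)
    then have "D h = D (Re h *\<^sub>R 1 + Im h *\<^sub>R \<i>)" by simp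
    also have "\<dots> = Re h * D 1 + Im h * D \<i>" using bl by (simp add: linear_add linear_cmul)
    finally show "D h = Re h * px u z + Im h * py u z"
      using px_char[OF D] py_char[OF D] by simp
  qed
  then show ?thesis using D by simp
qed

lemma dx_real:
  assumes "u differentiable (at (a + of_real s))"
  shows "((\<lambda>s. u (a + of_real s)) has_real_derivative px u (a + of_real s)) (at s)"
proof -
  have "((\<lambda>t::real. a + of_real t) has_derivative of_real) (at s)"
    by (auto intro!: derivative_eq_intros)
  from has_derivative_compose[OF this diff_char[OF assms]]
  have "((\<lambda>s. u (a + of_real s)) has_derivative (\<lambda>x. x * px u (a + of_real s))) (at s)" by simp
  moreover have "(\<lambda>x::real. x * px u (a + of_real s)) = (*) (px u (a + of_real s))" by (auto simp: mult.commute)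
  ultimately show ?thesis by (simp add: has_field_derivative_def)
qed

lemma dy_real:
  assumes "u differentiable (at (a + \<i> * of_real s))"
  shows "((\<lambda>s. u (a + \<i> * of_real s)) has_real_derivative py u (a + \<i> * of_real s)) (at s)"
proof -
  have "((\<lambda>t::real. a + \<i> * of_real t) has_derivative (\<lambda>h. \<i> * of_real h)) (at s)"
    by (auto intro!: derivative_eq_intros)
  from has_derivative_compose[OF this diff_char[OF assms]]
  have "((\<lambda>s. u (a + \<i> * of_real s)) has_derivative (\<lambda>x. x * py u (a + \<i> * of_real s))) (at s)" by simp
  moreover have "(\<lambda>x::real. x * py u (a + \<i> * of_real s)) = (*) (py u (a + \<i> * of_real s))" by (auto simp: mult.commute)
  ultimately show ?thesis by (simp add: has_field_derivative_def)
qed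

lemma young:
  assumes R: "open R" "z \<in> R" and du: "\<forall>w\<in>R. u differentiable (at w)"
    and dx: "px u differentiable (at z)" and dy: "py u differentiable (at z)"
  shows "py (px u) z = px (py u) z"
proof -
  define A where "A = py (px u) z"
  define B where "B = px (py u) z"
  define Pxx where "Pxx = px (px u) z"
  define Pyy where "Pyy = py (py u) z"
  have dpx: "(px u has_derivative (\<lambda>h. Re h * Pxx + Im h * A)) (at z)"
    using diff_char[OF dx] unfolding Pxx_def A_def .
  have dpy: "(py u has_derivative (\<lambda>h. Re h * B + Im h * Pyy)) (at z)"
    using diff_char[OF dy] unfolding Pyy_def B_def .
  have key: "\<bar>A - B\<bar> \<le> 6 * e" if e: "e > 0" for e
  proof -
    obtain d1 where d1: "d1 > 0" and H1: "\<And>y. norm (y - z) < d1 \<Longrightarrow>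
        \<bar>px u y - px u z - (Re (y - z) * Pxx + Im (y - z) * A)\<bar> \<le> e * norm (y - z)"
      using dpx[unfolded has_derivative_at_alt] e by force
    obtain d2 where d2: "d2 > 0" and H2: "\<And>y. norm (y - z) < d2 \<Longrightarrow>
        \<bar>py u y - py u z - (Re (y - z) * B + Im (y - z) * Pyy)\<bar> \<le> e * norm (y - z)"
      using dpy[unfolded has_derivative_at_alt] e by force
    obtain d0 where d0: "d0 > 0" and H0: "ball z d0 \<subseteq> R"
      using R open_contains_ball by blast
    define t where "t = min d0 (min d1 d2) / 3"
    have t: "t > 0" using d0 d1 d2 by (simp add: t_def)
    have inR: "y \<in> R" if "norm (y - z) \<le> 2 * t" for y
    proof -
      have "dist z y < d0" using that t unfolding t_def
        by (simp add: dist_norm norm_minus_commute) linarith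
      then show ?thesis using H0 by auto
    qed
    have nb: "norm (of_real a + \<i> * of_real b) \<le> 2 * t" if "0 \<le> a" "a \<le> t" "0 \<le> b" "b \<le> t" for a b
      using cmod_le[of "of_real a + \<i> * of_real b"] that by simp
    have lt1: "2 * t < d1" and lt2: "2 * t < d2" using t d0 d1 d2 by (auto simp: t_def)
    define \<Delta> where "\<Delta> = u (z + \<i> * of_real t + of_real t) - u (z + of_real t) - u (z + \<i> * of_real t) + u z"
    have "\<exists>\<xi>. 0 < \<xi> \<and> \<xi> < t \<and>
       (u (z + \<i> * of_real t + of_real t) - u (z + of_real t)) - (u (z + \<i> * of_real t + of_real 0) - u (z + of_real 0))
        = (t - 0) * (px u (z + \<i> * of_real t + of_real \<xi>) - px u (z + of_real \<xi>))"
    proof (rule MVT2[OF t])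
      fix s assume s: "0 \<le> s" "s \<le> t"
      have a: "u differentiable (at (z + \<i> * of_real t + of_real s))"
        using du inR[of "z + \<i> * of_real t + of_real s"] nb[of s t] s t by (simp add: add_ac)
      have b: "u differentiable (at (z + of_real s))"
        using du inR[of "z + of_real s"] nb[of s 0] s t by (simp add: add_ac)
      show "((\<lambda>s. u (z + \<i> * of_real t + of_real s) - u (z + of_real s)) has_real_derivative
          px u (z + \<i> * of_real t + of_real s) - px u (z + of_real s)) (at s)"
        by (rule derivative_eq_intros dx_real a b refl)+
    qed
    then obtain \<xi> where xi: "0 < \<xi>" "\<xi> < t"
      and m1: "\<Delta> = t * (px u (z + \<i> * of_real t + of_real \<xi>) - px u (z + of_real \<xi>))"
      unfolding \<Delta>_def by auto
    have E1: "\<bar>px u (z + \<i> * of_real t + of_real \<xi>) - px u z - (\<xi> * Pxx + t * A)\<bar> \<le> e * (2 * t)"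
    proof -
      have n: "norm ((z + \<i> * of_real t + of_real \<xi>) - z) \<le> 2 * t"
        using nb[of \<xi> t] xi t by (simp add: add_ac)
      have "\<bar>px u (z + \<i> * of_real t + of_real \<xi>) - px u z - (\<xi> * Pxx + t * A)\<bar> \<le> e * norm ((z + \<i> * of_real t + of_real \<xi>) - z)"
        using H1[of "z + \<i> * of_real t + of_real \<xi>"] n lt1 by simp
      also have "\<dots> \<le> e * (2 * t)" using n e by (intro mult_left_mono) auto
      finally show ?thesis .
    qed
    have E2: "\<bar>px u (z + of_real \<xi>) - px u z - \<xi> * Pxx\<bar> \<le> e * t"
    proof -
      have "\<bar>px u (z + of_real \<xi>) - px u z - \<xi> * Pxx\<bar> \<le> e * norm ((z + of_real \<xi>) - z)"
        using H1[of "z + of_real \<xi>"] xi lt1 t by simp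
      also have "\<dots> \<le> e * t" using xi e by (intro mult_left_mono) auto
      finally show ?thesis .
    qed
    have D1: "\<bar>\<Delta> - t\<^sup>2 * A\<bar> \<le> 3 * e * t\<^sup>2"
    proof -
      define X where "X = px u (z + \<i> * of_real t + of_real \<xi>) - px u (z + of_real \<xi>)"
      have "\<bar>X - t * A\<bar> \<le> 3 * e * t" using E1 E2 unfolding X_def by (simp add: abs_le_iff) 
      moreover have "\<Delta> - t\<^sup>2 * A = t * (X - t * A)" using m1 unfolding X_def by (simp add: power2_eq_square algebra_simps)
      ultimately show ?thesis using t by (simp add: abs_mult power2_eq_square mult_left_mono mult.assoc)
    qed
    have "\<exists>\<eta>. 0 < \<eta> \<and> \<eta> < t \<and>
       (u (z + of_real t + \<i> * of_real t) - u (z + \<i> * of_real t)) - (u (z + of_real t + \<i> * of_real 0) - u (z + \<i> * of_real 0))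
        = (t - 0) * (py u (z + of_real t + \<i> * of_real \<eta>) - py u (z + \<i> * of_real \<eta>))"
    proof (rule MVT2[OF t])
      fix s assume s: "0 \<le> s" "s \<le> t"
      have a: "u differentiable (at (z + of_real t + \<i> * of_real s))"
        using du inR[of "z + of_real t + \<i> * of_real s"] nb[of t s] s t by (simp add: add_ac)
      have b: "u differentiable (at (z + \<i> * of_real s))"
        using du inR[of "z + \<i> * of_real s"] nb[of 0 s] s t by (simp add: add_ac)
      show "((\<lambda>s. u (z + of_real t + \<i> * of_real s) - u (z + \<i> * of_real s)) has_real_derivative
          py u (z + of_real t + \<i> * of_real s) - py u (z + \<i> * of_real s)) (at s)"
        by (rule derivative_eq_intros dy_real a b refl)+
    qed
    then obtain \<eta> where eta: "0 < \<eta>" "\<eta> < t"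
      and m2: "\<Delta> = t * (py u (z + of_real t + \<i> * of_real \<eta>) - py u (z + \<i> * of_real \<eta>))"
      unfolding \<Delta>_def by (auto simp: add_ac)
    have E3: "\<bar>py u (z + of_real t + \<i> * of_real \<eta>) - py u z - (t * B + \<eta> * Pyy)\<bar> \<le> e * (2 * t)"
    proof -
      have n: "norm ((z + of_real t + \<i> * of_real \<eta>) - z) \<le> 2 * t"
        using nb[of t \<eta>] eta t by (simp add: add_ac)
      have "\<bar>py u (z + of_real t + \<i> * of_real \<eta>) - py u z - (t * B + \<eta> * Pyy)\<bar> \<le> e * norm ((z + of_real t + \<i> * of_real \<eta>) - z)"
        using H2[of "z + of_real t + \<i> * of_real \<eta>"] n lt2 by simp
      also have "\<dots> \<le> e * (2 * t)" using n e by (intro mult_left_mono) auto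
      finally show ?thesis .
    qed
    have E4: "\<bar>py u (z + \<i> * of_real \<eta>) - py u z - \<eta> * Pyy\<bar> \<le> e * t"
    proof -
      have "\<bar>py u (z + \<i> * of_real \<eta>) - py u z - \<eta> * Pyy\<bar> \<le> e * norm ((z + \<i> * of_real \<eta>) - z)"
        using H2[of "z + \<i> * of_real \<eta>"] eta lt2 t by (simp add: norm_mult)
      also have "\<dots> \<le> e * t" using eta e by (intro mult_left_mono) (auto simp: norm_mult)
      finally show ?thesis .
    qed
    have D2: "\<bar>\<Delta> - t\<^sup>2 * B\<bar> \<le> 3 * e * t\<^sup>2"
    proof -
      define X where "X = py u (z + of_real t + \<i> * of_real \<eta>) - py u (z + \<i> * of_real \<eta>)"
      have "\<bar>X - t * B\<bar> \<le> 3 * e * t" using E3 E4 unfolding X_def by (simp add: abs_le_iff) 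
      moreover have "\<Delta> - t\<^sup>2 * B = t * (X - t * B)" using m2 unfolding X_def by (simp add: power2_eq_square algebra_simps)
      ultimately show ?thesis using t by (simp add: abs_mult power2_eq_square mult_left_mono mult.assoc)
    qed
    have "t\<^sup>2 * \<bar>A - B\<bar> \<le> t\<^sup>2 * (6 * e)"
    proof -
      have "t\<^sup>2 * \<bar>A - B\<bar> = \<bar>(\<Delta> - t\<^sup>2 * B) - (\<Delta> - t\<^sup>2 * A)\<bar>"
      proof -
        have "(\<Delta> - t\<^sup>2 * B) - (\<Delta> - t\<^sup>2 * A) = t\<^sup>2 * (A - B)" by (simp add: algebra_simps)
        then show ?thesis by (simp add: abs_mult)
      qed
      also have "\<dots> \<le> \<bar>\<Delta> - t\<^sup>2 * B\<bar> + \<bar>\<Delta> - t\<^sup>2 * A\<bar>" by (rule abs_triangle_ineq4)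
      also have "\<dots> \<le> t\<^sup>2 * (6 * e)" using D1 D2 by (simp add: algebra_simps)
      finally show ?thesis .
    qed
    then show ?thesis using t by simp
  qed
  have "A = B"
  proof (rule ccontr)
    assume "A \<noteq> B"
    then have "\<bar>A - B\<bar> / 12 > 0" by simp
    from key[OF this] show False using \<open>A \<noteq> B\<close> by simp
  qed
  then show ?thesis unfolding A_def B_def .
qed

definition grd :: "(complex \<Rightarrow> real) \<Rightarrow> complex \<Rightarrow> complex" where
  "grd u z = of_real (px u z) - \<i> * of_real (py u z)"

lemma harm_diffs:
  assumes "harmonic_real_on R u" "z \<in> R"
  shows "u differentiable (at z)" "px u differentiable (at z)" "py u differentiable (at z)"
  using assms unfolding harmonic_real_on_def
  by (auto simp: differentiable_on_eq_differentiable_at)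

lemma harm_cont: "harmonic_real_on R u \<Longrightarrow> continuous_on R u"
  unfolding harmonic_real_on_def using differentiable_imp_continuous_on by blast

lemma grd_deriv:
  assumes "harmonic_real_on R u" "z \<in> R"
  shows "(u has_derivative (\<lambda>h. Re (grd u z * h))) (at z)"
proof -
  have "(\<lambda>h. Re h * px u z + Im h * py u z) = (\<lambda>h. Re (grd u z * h))"
    by (auto simp: grd_def)
  then show ?thesis using diff_char[OF harm_diffs(1)[OF assms]] by simp
qed

lemma grd_holo:
  assumes H: "harmonic_real_on R u"
  shows "grd u holomorphic_on R"
proof -
  have oR: "open R" using H unfolding harmonic_real_on_def by blast
  have "\<exists>c. (grd u has_field_derivative c) (at z)" if z: "z \<in> R" for z
  proof -
    have sym: "py (px u) z = px (py u) z"
      using young[OF oR z] harm_diffs[OF H] z by blast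
    have lap: "px (px u) z + py (py u) z = 0" using H z unfolding harmonic_real_on_def by blast
    have d1: "(px u has_derivative (\<lambda>h. Re h * px (px u) z + Im h * py (px u) z)) (at z)"
      using diff_char[OF harm_diffs(2)[OF H z]] .
    have d2: "(py u has_derivative (\<lambda>h. Re h * px (py u) z + Im h * py (py u) z)) (at z)"
      using diff_char[OF harm_diffs(3)[OF H z]] .
    have "((\<lambda>w. of_real (px u w) - \<i> * of_real (py u w)) has_derivative
       (\<lambda>h. of_real (Re h * px (px u) z + Im h * py (px u) z) - \<i> * of_real (Re h * px (py u) z + Im h * py (py u) z))) (at z)"
      by (intro derivative_intros d1 d2)
    moreover have "(\<lambda>h. of_real (Re h * px (px u) z + Im h * py (px u) z) - \<i> * of_real (Re h * px (py u) z + Im h * py (py u) z))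
        = (*) (of_real (px (px u) z) - \<i> * of_real (py (px u) z))"
    proof
      fix h
      have "py (py u) z = - px (px u) z" using lap by simp
      then show "of_real (Re h * px (px u) z + Im h * py (px u) z) - \<i> * of_real (Re h * px (py u) z + Im h * py (py u) z)
        = (of_real (px (px u) z) - \<i> * of_real (py (px u) z)) * h"
        using sym by (simp add: complex_eq_iff algebra_simps)
    qed
    ultimately show ?thesis unfolding has_field_derivative_def grd_def[abs_def] by auto
  qed
  then show ?thesis using oR by (simp add: holomorphic_on_open)
qed

lemma grd_const:
  assumes oR: "open R" and cR: "connected R" and Hu: "harmonic_real_on R u" and Hw: "harmonic_real_on R w"
    and eq: "\<forall>z\<in>R. grd w z = of_real l * grd u z" and z0: "z0 \<in> R" and z: "z \<in> R"
  shows "w z = l * u z + (w z0 - l * u z0)"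
proof -
  have "(\<lambda>z. w z - l * u z) z = (\<lambda>z. w z - l * u z) z0"
  proof (rule has_derivative_zero_unique_strong_connected[OF cR oR finite.emptyI])
    show "continuous_on R (\<lambda>z. w z - l * u z)"
      using harm_cont[OF Hu] harm_cont[OF Hw] by (intro continuous_intros) auto
    show "z0 \<in> R" "z \<in> R" by fact+
    show "(\<lambda>z. w z - l * u z) z0 = (\<lambda>z. w z - l * u z) z0" by simp
    fix x assume x: "x \<in> R - {}"
    have "((\<lambda>z. w z - l * u z) has_derivative (\<lambda>h. Re (grd w x * h) - l * Re (grd u x * h))) (at x)"
      using grd_deriv[OF Hu] grd_deriv[OF Hw] x by (intro derivative_intros) auto
    moreover have "(\<lambda>h. Re (grd w x * h) - l * Re (grd u x * h)) = (\<lambda>h. 0)"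
      using eq x by (auto simp: algebra_simps)
    ultimately show "((\<lambda>z. w z - l * u z) has_derivative (\<lambda>h. 0)) (at x within R)"
      by (auto intro: has_derivative_at_withinI)
  qed
  then show ?thesis by simp
qed

lemma level_infinite:
  assumes oR: "open R" and cR: "connected R" and Hw: "harmonic_real_on R w" and z0: "z0 \<in> R"
  shows "infinite {z\<in>R. w z = w z0}"
proof
  define t where "t = w z0"
  define L where "L = {z\<in>R. w z = w z0}"
  assume fin: "finite {z\<in>R. w z = w z0}"
  then have finL: "finite L" by (simp add: L_def)
  show False
  proof (cases "\<forall>z\<in>R. grd w z = 0")
    case True
    then have "\<forall>z\<in>R. w z = w z0"
      using grd_const[OF oR cR Hw Hw _ z0, of 0] by simp
    then have "L = R" by (auto simp: L_def)
    then show False using finite_imp_not_open[of R] finL oR z0 by auto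
  next
    case False
    then obtain z1 where z1: "z1 \<in> R" "grd w z1 \<noteq> 0" by blast
    have sign: "(\<forall>z\<in>R. t \<le> w z) \<or> (\<forall>z\<in>R. w z \<le> t)"
    proof (rule ccontr)
      assume "\<not> ?thesis"
      then obtain a b where ab: "a \<in> R" "b \<in> R" "w a < t" "t < w b" by (auto simp: not_le)
      have cRL: "connected (R - L)"
        using connected_open_delete_finite[OF oR cR _ finL] by simp
      have "continuous_on (R - L) w" using harm_cont[OF Hw] continuous_on_subset by blast
      then have ci: "connected (w ` (R - L))" using cRL connected_continuous_image by blast
      have "a \<in> R - L" "b \<in> R - L" using ab by (auto simp: L_def t_def)
      then have "t \<in> w ` (R - L)"
        using connectedD_interval[OF ci, of "w a" "w b" t] ab by auto
      then show False by (auto simp: L_def t_def)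
    qed
    obtain r where r: "r > 0" "ball z0 r \<subseteq> R" using oR z0 open_contains_ball by blast
    define B where "B = ball z0 r"
    have oB: "open B" and cB: "connected B" and z0B: "z0 \<in> B" and BR: "B \<subseteq> R"
      using r by (auto simp: B_def)
    have hB: "grd w holomorphic_on B" using grd_holo[OF Hw] BR holomorphic_on_subset by blast
    obtain H where H: "\<And>x. x \<in> B \<Longrightarrow> (H has_field_derivative grd w x) (at x within B)"
      using holomorphic_convex_primitive'[OF _ oB hB] by (auto simp: B_def)
    have Hd: "(H has_field_derivative grd w x) (at x)" if "x \<in> B" for x
      using H[OF that] at_within_open[OF that oB] by simp
    have holH: "H holomorphic_on B" using Hd oB by (auto simp: holomorphic_on_open)
    have ReH: "Re (H x) = w x - w z0 + Re (H z0)" if x: "x \<in> B" for x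
    proof -
      have "(\<lambda>z. w z - Re (H z)) x = (\<lambda>z. w z - Re (H z)) z0"
      proof (rule has_derivative_zero_unique_strong_connected[OF cB oB finite.emptyI, of "\<lambda>z. w z - Re (H z)" z0])
        show "continuous_on B (\<lambda>z. w z - Re (H z))"
          using harm_cont[OF Hw] continuous_on_subset[OF _ BR] holomorphic_on_imp_continuous_on[OF holH]
          by (intro continuous_intros) auto
        show "z0 \<in> B" "x \<in> B" by fact+
        show "(\<lambda>z. w z - Re (H z)) z0 = (\<lambda>z. w z - Re (H z)) z0" by simp
        fix y assume y: "y \<in> B - {}"
        have "((\<lambda>z. w z - Re (H z)) has_derivative (\<lambda>h. Re (grd w y * h) - Re (grd w y * h))) (at y)"
          using grd_deriv[OF Hw, of y] y BR Hd[of y]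
          by (intro derivative_intros) (auto simp: has_field_derivative_def)
        then show "((\<lambda>z. w z - Re (H z)) has_derivative (\<lambda>h. 0)) (at y within B)"
          by (auto intro: has_derivative_at_withinI)
      qed
      then show ?thesis by simp
    qed
    have ncH: "\<not> H constant_on B"
    proof
      assume "H constant_on B"
      then obtain c where c: "\<And>x. x \<in> B \<Longrightarrow> H x = c" by (auto simp: constant_on_def)
      have g0: "grd w x = 0" if x: "x \<in> B" for x
      proof -
        have "((\<lambda>_. c) has_field_derivative grd w x) (at x)"
          using has_field_derivative_transform_within_open[OF Hd[OF x] oB x] c by auto
        then show ?thesis using DERIV_const DERIV_unique by blast
      qed
      have "grd w z1 = (\<lambda>_. 0) z1"
        by (rule analytic_continuation_open[OF oB oR _ cR BR grd_holo[OF Hw]])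
           (use g0 z0B z1 in auto)
      then show False using z1 by simp
    qed
    have "open (H ` B)" using open_mapping_thm[OF holH oB cB oB order_refl ncH] .
    then obtain e where e: "e > 0" "ball (H z0) e \<subseteq> H ` B"
      using z0B open_contains_ball by blast
    have "H z0 - of_real (e/2) \<in> H ` B" "H z0 + of_real (e/2) \<in> H ` B"
      using e by (auto simp: dist_norm subset_iff)
    then obtain x1 x2 where x: "x1 \<in> B" "x2 \<in> B" "H x1 = H z0 - of_real (e/2)" "H x2 = H z0 + of_real (e/2)"
      by (metis imageE)
    have "Re (H x1) = Re (H z0) - e/2" "Re (H x2) = Re (H z0) + e/2" using x(3,4) by simp_all
    then have "w x1 < t" "t < w x2" using ReH[OF x(1)] ReH[OF x(2)] e(1) unfolding t_def by linarith+
    then show False using sign x BR by fastforce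
  qed
qed

lemma grd_parts: "Re (grd u z) = px u z" "Im (grd u z) = - py u z"
  by (simp_all add: grd_def)

lemma rep:
  assumes oR: "open R" and cR: "connected R" and H: "harmonic_on R f"
    and int: "interior (crit_set R f) \<noteq> {}"
  shows "\<exists>\<alpha> \<beta> :: complex. \<exists>w :: complex \<Rightarrow> real.
            harmonic_real_on R w \<and> (\<forall>z\<in>R. f z = \<alpha> + \<beta> * of_real (w z)) \<and> (\<forall>z\<in>R. jac f z = 0)"
proof -
  define u where "u = (\<lambda>z. Re (f z))"
  define v where "v = (\<lambda>z. Im (f z))"
  have Hu: "harmonic_real_on R u" and Hv: "harmonic_real_on R v"
    using H by (simp_all add: harmonic_on_def u_def v_def)
  have jac: "jac f z = px u z * py v z - py u z * px v z" for z
    by (simp add: jac_def u_def v_def)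
  have fz: "f z = of_real (u z) + \<i> * of_real (v z)" for z
    by (simp add: u_def v_def complex_eq_iff)
  obtain z1 where "z1 \<in> interior (crit_set R f)" using int by blast
  then obtain r where r: "r > 0" "ball z1 r \<subseteq> crit_set R f"
    using open_contains_ball open_interior interior_subset by (metis subset_trans)
  have ballR: "ball z1 r \<subseteq> R" using r by (auto simp: crit_set_def)
  have jac0: "jac f z = 0" if "z \<in> ball z1 r" for z using r that by (auto simp: crit_set_def)
  show ?thesis
  proof (cases "\<forall>z\<in>ball z1 r. grd u z = 0")
    case True
    have g0: "grd u z = 0" if "z \<in> R" for z
      using analytic_continuation_open[OF open_ball oR _ cR ballR grd_holo[OF Hu], of "\<lambda>_. 0"] True r that
      by auto
    have z1R: "z1 \<in> R" using ballR r by auto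
    have uc: "u z = u z1" if "z \<in> R" for z
      using grd_const[OF oR cR Hv Hu _ z1R that, of 0] g0 by simp
    show ?thesis
    proof (intro exI conjI ballI)
      show "harmonic_real_on R v" by fact
      fix z assume z: "z \<in> R"
      show "f z = of_real (u z1) + \<i> * of_real (v z)" using fz uc z by simp
      have "px u z = 0" "py u z = 0" using g0[OF z] grd_parts[of u z] by auto
      then show "jac f z = 0" by (simp add: jac)
    qed
  next
    case False
    then obtain z2 where z2: "z2 \<in> ball z1 r" "grd u z2 \<noteq> 0" by blast
    have z2R: "z2 \<in> R" using z2 ballR by auto
    have "isCont (grd u) z2"
      using holomorphic_on_imp_continuous_on[OF grd_holo[OF Hu]] oR z2R
      by (simp add: continuous_on_eq_continuous_at)
    then obtain \<epsilon> where eps: "\<epsilon> > 0" "\<And>y. dist z2 y < \<epsilon> \<Longrightarrow> grd u y \<noteq> 0"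
      using continuous_at_avoid z2 by blast
    define r2 where "r2 = min \<epsilon> (r - dist z1 z2)"
    define B2 where "B2 = ball z2 r2"
    have r2: "r2 > 0" using eps z2 by (simp add: r2_def)
    have B2sub: "B2 \<subseteq> ball z1 r"
    proof
      fix x assume "x \<in> B2"
      then have "dist z2 x < r - dist z1 z2" by (auto simp: B2_def r2_def)
      moreover have "dist z1 x \<le> dist z1 z2 + dist z2 x" by (rule dist_triangle)
      ultimately show "x \<in> ball z1 r" by simp
    qed
    have B2nz: "grd u y \<noteq> 0" if "y \<in> B2" for y using eps that by (auto simp: B2_def r2_def)
    have z2B2: "z2 \<in> B2" using r2 by (simp add: B2_def)
    define q where "q = (\<lambda>z. grd v z / grd u z)"
    have holq: "q holomorphic_on B2"
      unfolding q_def using B2sub ballR B2nz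
      by (intro holomorphic_intros holomorphic_on_subset[OF grd_holo[OF Hv]] holomorphic_on_subset[OF grd_holo[OF Hu]]) auto
    have Imq: "Im (q z) = 0" if z: "z \<in> B2" for z
    proof -
      have "jac f z = 0" using jac0 B2sub z by auto
      then show ?thesis by (simp add: q_def Im_divide grd_parts jac algebra_simps)
    qed
    have qc: "q constant_on B2"
    proof (rule ccontr)
      assume nc: "\<not> q constant_on B2"
      have oB2: "open B2" and cB2: "connected B2" by (simp_all add: B2_def)
      have "open (q ` B2)" using open_mapping_thm[OF holq oB2 cB2 oB2 order_refl nc] .
      then obtain e where e: "e > 0" "ball (q z2) e \<subseteq> q ` B2"
        using z2B2 open_contains_ball by blast
      have "cmod (q z2 - (q z2 + \<i> * of_real (e/2))) = e/2" using e by (simp add: norm_mult)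
      then have "q z2 + \<i> * of_real (e/2) \<in> ball (q z2) e" using e by (simp add: dist_norm)
      then have "q z2 + \<i> * of_real (e/2) \<in> q ` B2" using e by blast
      then obtain x where x: "x \<in> B2" "q x = q z2 + \<i> * of_real (e/2)" by (metis imageE)
      have "Im (q x) = e/2" using x Imq[OF z2B2] by simp
      then show False using Imq[OF x(1)] e by simp
    qed
    define l where "l = Re (q z2)"
    have ql: "q z = of_real l" if "z \<in> B2" for z
    proof -
      have "q z = q z2" using qc that z2B2 by (auto simp: constant_on_def)
      then show ?thesis using Imq[OF z2B2] by (simp add: l_def complex_eq_iff)
    qed
    have gB2: "grd v z = of_real l * grd u z" if "z \<in> B2" for z
      using ql[OF that] B2nz[OF that] by (simp add: q_def field_simps)
    have gR: "grd v z = of_real l * grd u z" if z: "z \<in> R" for z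
    proof -
      have B2R: "B2 \<subseteq> R" using B2sub ballR by blast
      have hl: "(\<lambda>z. of_real l * grd u z) holomorphic_on R"
        using grd_holo[OF Hu] by (intro holomorphic_intros)
      have oB2: "open B2" by (simp add: B2_def)
      show ?thesis
        using analytic_continuation_open[OF oB2 oR _ cR B2R grd_holo[OF Hv] hl gB2 z] z2B2 by blast
    qed
    have vc: "v z = l * u z + (v z2 - l * u z2)" if "z \<in> R" for z
      using grd_const[OF oR cR Hu Hv _ z2R that, of l] gR by simp
    show ?thesis
    proof (intro exI conjI ballI)
      show "harmonic_real_on R u" by fact
      fix z assume z: "z \<in> R"
      show "f z = \<i> * of_real (v z2 - l * u z2) + (1 + \<i> * of_real l) * of_real (u z)"
        using fz[of z] vc[OF z] by (simp add: complex_eq_iff algebra_simps)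
      have "px v z = l * px u z" "py v z = l * py u z"
        using gR[OF z] grd_parts[of v z] grd_parts[of u z] by (auto simp: complex_eq_iff)
      then show "jac f z = 0" by (simp add: jac)
    qed
  qed
qed

theorem lemma4p7:
  fixes f :: "complex \<Rightarrow> complex" and R :: "complex set"
  assumes "open R" and "simply_connected R"
    and "harmonic_on R f"
    and "interior (crit_set R f) \<noteq> {}"
  shows "(\<exists>\<alpha> \<beta> :: complex. \<exists>u :: complex \<Rightarrow> real.
            harmonic_real_on R u \<and> (\<forall>z\<in>R. f z = \<alpha> + \<beta> * of_real (u z)))
         \<and> crit_set R f = R
         \<and> (\<forall>w0\<in>f ` R. Val R f w0 = \<infinity>)"
proof -
  have cR: "connected R" using assms(2) simply_connected_imp_connected by blast
  obtain \<alpha> \<beta> w where Hw: "harmonic_real_on R w" and fr: "\<forall>z\<in>R. f z = \<alpha> + \<beta> * of_real (w z)"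
    and j: "\<forall>z\<in>R. jac f z = 0"
    using rep[OF assms(1) cR assms(3,4)] by blast
  have C: "crit_set R f = R" using j by (auto simp: crit_set_def)
  have V: "Val R f w0 = \<infinity>" if w0: "w0 \<in> f ` R" for w0
  proof -
    obtain z0 where z0: "z0 \<in> R" "w0 = f z0" using w0 by blast
    have "infinite {z\<in>R. f z = w0}"
    proof (cases "\<beta> = 0")
      case True
      then have eqR: "{z\<in>R. f z = w0} = R" using fr z0 by auto
      have "infinite R" using finite_imp_not_open[of R] assms(1) z0(1) by blast
      then show ?thesis by (subst eqR)
    next
      case False
      have "f z = w0 \<longleftrightarrow> w z = w z0" if "z \<in> R" for z
      proof -
        have "f z = w0 \<longleftrightarrow> \<beta> * of_real (w z) = \<beta> * of_real (w z0)" using fr z0 that by auto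
        also have "\<dots> \<longleftrightarrow> w z = w z0" using False by simp
        finally show ?thesis .
      qed
      then have "{z\<in>R. f z = w0} = {z\<in>R. w z = w z0}" by auto
      then show ?thesis using level_infinite[OF assms(1) cR Hw z0(1)] by simp
    qed
    then show ?thesis unfolding Val_def by (simp only: if_False)
  qed
  have E: "\<exists>\<alpha> \<beta> :: complex. \<exists>u :: complex \<Rightarrow> real.
            harmonic_real_on R u \<and> (\<forall>z\<in>R. f z = \<alpha> + \<beta> * of_real (u z))"
    using Hw fr by (intro exI[of _ \<alpha>] exI[of _ \<beta>] exI[of _ w] conjI)
  show ?thesis by (intro conjI E C ballI V)
qed

end
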